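(* Let $X=\varprojlim X_np_n$ be a reduced regular projective limit of vector lattices $(X_n,\le_n)$. For every additive positive function $a\colon X\to\mathbb R$ there exist $n_a\in\mathbb N$ and additive positive functions $a_n\colon X_n\to\mathbb R$, $n\ge n_a$, such that $a(x)=a_n(\operatorname{pr}_nx)$ for all $x\in X$ and all $n\ge n_a$. Conversely, if $a_n\colon X_n\to\mathbb R$ is additive and positive, then $a:=a_n\circ\operatorname{pr}_n$ is an additive positive function on $X$. The same statements hold with "additive positive" replaced by "difference of two additive positive functions".
   Context: All vector spaces are real. Let $(X_n,\le_n)_{n\in\mathbb N}$ be ordered vector spaces and $p_n\colon X_{n+1}\to X_n$ positive linear maps. The projective limit $X=\varprojlim X_np_n$ is the vector subspace $\{x=(x_n)\in\prod_nX_n:\ x_n=p_n(x_{n+1})\ \text{for all }n\}$ with the coordinatewise order; $\operatorname{pr}_nx=x_n$. It is regular if all $X_n$ are vector lattices and each $p_n$ preserves suprema of finite sets, and reduced if $\operatorname{pr}_nX=X_n$ for all $n$. A function $a$ between additive semigroups is additive if $a(x_1+x_2)=a(x_1)+a(x_2)$; a function $a$ between ordered vector spaces is positive if $a(x)\ge0$ whenever $x\ge0$. *)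

theory Defs
  imports Main "HOL.Real_Vector_Spaces"
begin

text \<open>Each space X_n is modelled as a carrier set S n inside a common real vector
space 'a, with its own order le n. The projective limit consists of sequences
x :: nat => 'a.\<close>

definition linear_subspace_on :: "'a::real_vector set \<Rightarrow> bool" where
  "linear_subspace_on S \<longleftrightarrow> 0 \<in> S \<and> (\<forall>x\<in>S. \<forall>y\<in>S. x + y \<in> S) \<and> (\<forall>c. \<forall>x\<in>S. c *\<^sub>R x \<in> S)"

definition ordered_vector_space_on :: "'a::real_vector set \<Rightarrow> ('a \<Rightarrow> 'a \<Rightarrow> bool) \<Rightarrow> bool" where
  "ordered_vector_space_on S le \<longleftrightarrow> linear_subspace_on S
     \<and> (\<forall>x\<in>S. le x x)
     \<and> (\<forall>x\<in>S. \<forall>y\<in>S. le x y \<and> le y x \<longrightarrow> x = y)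
     \<and> (\<forall>x\<in>S. \<forall>y\<in>S. \<forall>z\<in>S. le x y \<and> le y z \<longrightarrow> le x z)
     \<and> (\<forall>x\<in>S. \<forall>y\<in>S. \<forall>z\<in>S. le x y \<longrightarrow> le (x + z) (y + z))
     \<and> (\<forall>x\<in>S. \<forall>y\<in>S. \<forall>t::real. le x y \<and> 0 \<le> t \<longrightarrow> le (t *\<^sub>R x) (t *\<^sub>R y))"

definition is_sup_on :: "'a set \<Rightarrow> ('a \<Rightarrow> 'a \<Rightarrow> bool) \<Rightarrow> 'a set \<Rightarrow> 'a \<Rightarrow> bool" where
  "is_sup_on S le F s \<longleftrightarrow> s \<in> S \<and> (\<forall>x\<in>F. le x s) \<and> (\<forall>u\<in>S. (\<forall>x\<in>F. le x u) \<longrightarrow> le s u)"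

definition vector_lattice_on :: "'a::real_vector set \<Rightarrow> ('a \<Rightarrow> 'a \<Rightarrow> bool) \<Rightarrow> bool" where
  "vector_lattice_on S le \<longleftrightarrow> ordered_vector_space_on S le
     \<and> (\<forall>x\<in>S. \<forall>y\<in>S. \<exists>s. is_sup_on S le {x, y} s)"

definition positive_linear_map_on ::
  "'a::real_vector set \<Rightarrow> ('a \<Rightarrow> 'a \<Rightarrow> bool) \<Rightarrow> 'a set \<Rightarrow> ('a \<Rightarrow> 'a \<Rightarrow> bool) \<Rightarrow> ('a \<Rightarrow> 'a) \<Rightarrow> bool" where
  "positive_linear_map_on S leS T leT f \<longleftrightarrow> (\<forall>x\<in>S. f x \<in> T)
     \<and> (\<forall>x\<in>S. \<forall>y\<in>S. f (x + y) = f x + f y)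
     \<and> (\<forall>c. \<forall>x\<in>S. f (c *\<^sub>R x) = c *\<^sub>R f x)
     \<and> (\<forall>x\<in>S. leS 0 x \<longrightarrow> leT 0 (f x))"

definition proj_system :: "(nat \<Rightarrow> 'a::real_vector set) \<Rightarrow> (nat \<Rightarrow> 'a \<Rightarrow> 'a \<Rightarrow> bool) \<Rightarrow> (nat \<Rightarrow> 'a \<Rightarrow> 'a) \<Rightarrow> bool" where
  "proj_system S le p \<longleftrightarrow> (\<forall>n. ordered_vector_space_on (S n) (le n))
     \<and> (\<forall>n. positive_linear_map_on (S (Suc n)) (le (Suc n)) (S n) (le n) (p n))"

definition proj_lim :: "(nat \<Rightarrow> 'a set) \<Rightarrow> (nat \<Rightarrow> 'a \<Rightarrow> 'a) \<Rightarrow> (nat \<Rightarrow> 'a) set" where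
  "proj_lim S p = {x. (\<forall>n. x n \<in> S n) \<and> (\<forall>n. x n = p n (x (Suc n)))}"

definition regular_proj_lim :: "(nat \<Rightarrow> 'a::real_vector set) \<Rightarrow> (nat \<Rightarrow> 'a \<Rightarrow> 'a \<Rightarrow> bool) \<Rightarrow> (nat \<Rightarrow> 'a \<Rightarrow> 'a) \<Rightarrow> bool" where
  "regular_proj_lim S le p \<longleftrightarrow> (\<forall>n. vector_lattice_on (S n) (le n))
     \<and> (\<forall>n F s. finite F \<and> F \<noteq> {} \<and> F \<subseteq> S (Suc n) \<and> is_sup_on (S (Suc n)) (le (Suc n)) F s
                 \<longrightarrow> is_sup_on (S n) (le n) (p n ` F) (p n s))"

definition reduced_proj_lim :: "(nat \<Rightarrow> 'a set) \<Rightarrow> (nat \<Rightarrow> 'a \<Rightarrow> 'a) \<Rightarrow> bool" where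
  "reduced_proj_lim S p \<longleftrightarrow> (\<forall>n. (\<lambda>x. x n) ` proj_lim S p = S n)"

definition additive_on :: "'b::plus set \<Rightarrow> ('b \<Rightarrow> real) \<Rightarrow> bool" where
  "additive_on A f \<longleftrightarrow> (\<forall>x\<in>A. \<forall>y\<in>A. f (x + y) = f x + f y)"

definition positive_fun_on :: "'b set \<Rightarrow> ('b \<Rightarrow> 'b \<Rightarrow> bool) \<Rightarrow> 'b \<Rightarrow> ('b \<Rightarrow> real) \<Rightarrow> bool" where
  "positive_fun_on A le z f \<longleftrightarrow> (\<forall>x\<in>A. le z x \<longrightarrow> 0 \<le> f x)"

definition add_pos_on :: "'b::plus set \<Rightarrow> ('b \<Rightarrow> 'b \<Rightarrow> bool) \<Rightarrow> 'b \<Rightarrow> ('b \<Rightarrow> real) \<Rightarrow> bool" where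
  "add_pos_on A le z f \<longleftrightarrow> additive_on A f \<and> positive_fun_on A le z f"

definition diff_add_pos_on :: "'b::plus set \<Rightarrow> ('b \<Rightarrow> 'b \<Rightarrow> bool) \<Rightarrow> 'b \<Rightarrow> ('b \<Rightarrow> real) \<Rightarrow> bool" where
  "diff_add_pos_on A le z f \<longleftrightarrow>
     (\<exists>g h. add_pos_on A le z g \<and> add_pos_on A le z h \<and> (\<forall>x\<in>A. f x = g x - h x))"

instantiation "fun" :: (type, plus) plus begin
definition plus_fun_def: "f + g = (\<lambda>x. f x + g x)"
instance ..
end

definition lim_le :: "(nat \<Rightarrow> 'a \<Rightarrow> 'a \<Rightarrow> bool) \<Rightarrow> (nat \<Rightarrow> 'a) \<Rightarrow> (nat \<Rightarrow> 'a) \<Rightarrow> bool" where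
  "lim_le le x y \<longleftrightarrow> (\<forall>n. le n (x n) (y n))"

end

theory Submission imports Defs begin

locale PL =
  fixes S :: "nat \<Rightarrow> 'a::real_vector set" and le :: "nat \<Rightarrow> 'a \<Rightarrow> 'a \<Rightarrow> bool" and p :: "nat \<Rightarrow> 'a \<Rightarrow> 'a"
  assumes sys: "proj_system S le p" and reg: "regular_proj_lim S le p" and red: "reduced_proj_lim S p"
begin

lemma ovs: "ordered_vector_space_on (S n) (le n)"
  using sys unfolding proj_system_def by blast

lemma ls: "linear_subspace_on (S n)" using ovs[of n] unfolding ordered_vector_space_on_def by (rule conjunct1)
lemma S_0: "0 \<in> S n" using ls[of n] unfolding linear_subspace_on_def by (rule conjunct1)
lemma S_add: "x \<in> S n \<Longrightarrow> y \<in> S n \<Longrightarrow> x + y \<in> S n"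
  using ls[of n] unfolding linear_subspace_on_def by auto
lemma S_scale: "x \<in> S n \<Longrightarrow> c *\<^sub>R x \<in> S n"
  using ls[of n] unfolding linear_subspace_on_def by auto
lemma S_uminus: "x \<in> S n \<Longrightarrow> - x \<in> S n"
  using S_scale[of x n "-1"] by simp
lemma S_diff: "x \<in> S n \<Longrightarrow> y \<in> S n \<Longrightarrow> x - y \<in> S n"
  using S_add[of x n "-y"] S_uminus[of y n] by simp
lemma S_sum: "finite A \<Longrightarrow> (\<And>j. j \<in> A \<Longrightarrow> f j \<in> S n) \<Longrightarrow> sum f A \<in> S n"
  by (induction A rule: finite_induct) (auto intro: S_0 S_add)

lemma ovs': "(\<forall>x\<in>S n. le n x x)
     \<and> (\<forall>x\<in>S n. \<forall>y\<in>S n. le n x y \<and> le n y x \<longrightarrow> x = y)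
     \<and> (\<forall>x\<in>S n. \<forall>y\<in>S n. \<forall>z\<in>S n. le n x y \<and> le n y z \<longrightarrow> le n x z)
     \<and> (\<forall>x\<in>S n. \<forall>y\<in>S n. \<forall>z\<in>S n. le n x y \<longrightarrow> le n (x + z) (y + z))
     \<and> (\<forall>x\<in>S n. \<forall>y\<in>S n. \<forall>t::real. le n x y \<and> 0 \<le> t \<longrightarrow> le n (t *\<^sub>R x) (t *\<^sub>R y))"
  using ovs[of n] unfolding ordered_vector_space_on_def by (rule conjunct2)

lemma le_refl: "x \<in> S n \<Longrightarrow> le n x x"
  using conjunct1[OF ovs'[of n]] by (rule bspec)
lemma le_antisym: "x \<in> S n \<Longrightarrow> y \<in> S n \<Longrightarrow> le n x y \<Longrightarrow> le n y x \<Longrightarrow> x = y"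
proof -
  assume a: "x \<in> S n" "y \<in> S n" "le n x y" "le n y x"
  have h: "\<forall>x\<in>S n. \<forall>y\<in>S n. le n x y \<and> le n y x \<longrightarrow> x = y" using ovs'[of n] by (rule conjunct1[OF conjunct2])
  show ?thesis using h[rule_format, OF a(1,2)] a(3,4) by blast
qed
lemma le_trans: "x \<in> S n \<Longrightarrow> y \<in> S n \<Longrightarrow> z \<in> S n \<Longrightarrow> le n x y \<Longrightarrow> le n y z \<Longrightarrow> le n x z"
proof -
  assume a: "x \<in> S n" "y \<in> S n" "z \<in> S n" "le n x y" "le n y z"
  have h: "\<forall>x\<in>S n. \<forall>y\<in>S n. \<forall>z\<in>S n. le n x y \<and> le n y z \<longrightarrow> le n x z"
    using ovs'[of n] by (rule conjunct1[OF conjunct2[OF conjunct2]])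
  show ?thesis using h[rule_format, OF a(1,2,3)] a(4,5) by blast
qed
lemma le_add: "x \<in> S n \<Longrightarrow> y \<in> S n \<Longrightarrow> z \<in> S n \<Longrightarrow> le n x y \<Longrightarrow> le n (x + z) (y + z)"
proof -
  assume a: "x \<in> S n" "y \<in> S n" "z \<in> S n" "le n x y"
  have h: "\<forall>x\<in>S n. \<forall>y\<in>S n. \<forall>z\<in>S n. le n x y \<longrightarrow> le n (x + z) (y + z)"
    using ovs'[of n] by (rule conjunct1[OF conjunct2[OF conjunct2[OF conjunct2]]])
  show ?thesis using h[rule_format, OF a(1,2,3)] a(4) by blast
qed
lemma le_scale: "x \<in> S n \<Longrightarrow> y \<in> S n \<Longrightarrow> le n x y \<Longrightarrow> 0 \<le> t \<Longrightarrow> le n (t *\<^sub>R x) (t *\<^sub>R y)"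
proof -
  assume a: "x \<in> S n" "y \<in> S n" "le n x y" "0 \<le> t"
  have h: "\<forall>x\<in>S n. \<forall>y\<in>S n. \<forall>t::real. le n x y \<and> 0 \<le> t \<longrightarrow> le n (t *\<^sub>R x) (t *\<^sub>R y)"
    using ovs'[of n] by (rule conjunct2[OF conjunct2[OF conjunct2[OF conjunct2]]])
  show ?thesis using h[rule_format, OF a(1,2), of t] a(3,4) by blast
qed

lemma le_diff0: "x \<in> S n \<Longrightarrow> y \<in> S n \<Longrightarrow> le n x y \<Longrightarrow> le n 0 (y - x)"
  using le_add[of x n y "-x"] S_uminus[of x n] by simp

lemma sum_pos: "finite A \<Longrightarrow> (\<And>j. j \<in> A \<Longrightarrow> f j \<in> S n \<and> le n 0 (f j)) \<Longrightarrow> le n 0 (sum f A)"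
proof (induction A rule: finite_induct)
  case empty then show ?case using le_refl[OF S_0] by simp
next
  case (insert x F)
  have F: "sum f F \<in> S n" using insert by (auto intro: S_sum)
  have fx: "f x \<in> S n" "le n 0 (f x)" using insert by auto
  have "le n (0 + sum f F) (f x + sum f F)" using le_add[OF S_0 fx(1) F fx(2)] .
  then have "le n (sum f F) (f x + sum f F)" by simp
  moreover have "le n 0 (sum f F)" using insert by auto
  ultimately show ?case using insert F fx le_trans[OF S_0 F S_add[OF fx(1) F]] by simp
qed

lemma pl: "positive_linear_map_on (S (Suc n)) (le (Suc n)) (S n) (le n) (p n)"
  using sys unfolding proj_system_def by blast
lemma p_in: "x \<in> S (Suc n) \<Longrightarrow> p n x \<in> S n"
  using pl[of n] unfolding positive_linear_map_on_def by auto
lemma p_add: "x \<in> S (Suc n) \<Longrightarrow> y \<in> S (Suc n) \<Longrightarrow> p n (x + y) = p n x + p n y"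
  using pl[of n] unfolding positive_linear_map_on_def by auto
lemma p_scale: "x \<in> S (Suc n) \<Longrightarrow> p n (c *\<^sub>R x) = c *\<^sub>R p n x"
  using pl[of n] unfolding positive_linear_map_on_def by auto
lemma p_0: "p n 0 = 0"
  using p_scale[OF S_0, of n 0] by simp
lemma p_diff: "x \<in> S (Suc n) \<Longrightarrow> y \<in> S (Suc n) \<Longrightarrow> p n (x - y) = p n x - p n y"
proof -
  assume a: "x \<in> S (Suc n)" "y \<in> S (Suc n)"
  have e1: "p n (x + (-1) *\<^sub>R y) = p n x + p n ((-1) *\<^sub>R y)" by (rule p_add[OF a(1) S_scale[OF a(2)]])
  have e2: "p n ((-1) *\<^sub>R y) = (-1) *\<^sub>R p n y" by (rule p_scale[OF a(2)])
  from e1 e2 show ?thesis by simp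
qed
lemma p_sum: "finite A \<Longrightarrow> (\<And>j. j \<in> A \<Longrightarrow> f j \<in> S (Suc n)) \<Longrightarrow> p n (sum f A) = (\<Sum>j\<in>A. p n (f j))"
proof (induction A rule: finite_induct)
  case empty show ?case by (simp add: p_0)
next
  case (insert x F)
  have fx: "f x \<in> S (Suc n)" using insert.prems by simp
  have sF: "sum f F \<in> S (Suc n)" using insert.prems by (intro S_sum[OF insert.hyps(1)]) simp
  have "p n (sum f (insert x F)) = p n (f x + sum f F)" using insert.hyps by simp
  also have "\<dots> = p n (f x) + p n (sum f F)" by (rule p_add[OF fx sF])
  also have "p n (sum f F) = (\<Sum>j\<in>F. p n (f j))" using insert.IH insert.prems by simp
  finally show ?case using insert.hyps by simp
qed

lemma sup_unique: "is_sup_on (S n) (le n) F s \<Longrightarrow> is_sup_on (S n) (le n) F t \<Longrightarrow> s = t"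
  unfolding is_sup_on_def using le_antisym by blast

definition psup where "psup n u v = (SOME s. is_sup_on (S n) (le n) {u,v} s)"

lemma psup: "u \<in> S n \<Longrightarrow> v \<in> S n \<Longrightarrow> is_sup_on (S n) (le n) {u,v} (psup n u v)"
proof -
  assume "u \<in> S n" "v \<in> S n"
  moreover have "vector_lattice_on (S n) (le n)" using reg unfolding regular_proj_lim_def by blast
  ultimately obtain s where "is_sup_on (S n) (le n) {u,v} s" unfolding vector_lattice_on_def by blast
  then show ?thesis unfolding psup_def by (rule someI)
qed

lemma psup_eq: "u \<in> S n \<Longrightarrow> v \<in> S n \<Longrightarrow> is_sup_on (S n) (le n) {u,v} s \<Longrightarrow> psup n u v = s"
  using psup sup_unique by blast

lemma psup_in: "u \<in> S n \<Longrightarrow> v \<in> S n \<Longrightarrow> psup n u v \<in> S n"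
  using psup unfolding is_sup_on_def by blast
lemma psup_ge1: "u \<in> S n \<Longrightarrow> v \<in> S n \<Longrightarrow> le n u (psup n u v)"
  using psup unfolding is_sup_on_def by blast
lemma psup_ge2: "u \<in> S n \<Longrightarrow> v \<in> S n \<Longrightarrow> le n v (psup n u v)"
  using psup unfolding is_sup_on_def by blast

lemma psup_pos: "u \<in> S n \<Longrightarrow> le n 0 u \<Longrightarrow> psup n u 0 = u"
proof -
  assume a: "u \<in> S n" "le n 0 u"
  have "is_sup_on (S n) (le n) {u,0} u" unfolding is_sup_on_def using a le_refl[OF a(1)] by simp
  then show ?thesis by (rule psup_eq[OF a(1) S_0])
qed

lemma p_psup: "u \<in> S (Suc n) \<Longrightarrow> v \<in> S (Suc n) \<Longrightarrow> p n (psup (Suc n) u v) = psup n (p n u) (p n v)"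
proof -
  assume uv: "u \<in> S (Suc n)" "v \<in> S (Suc n)"
  have "is_sup_on (S n) (le n) (p n ` {u,v}) (p n (psup (Suc n) u v))"
  proof -
    have r: "\<forall>n F s. finite F \<and> F \<noteq> {} \<and> F \<subseteq> S (Suc n) \<and> is_sup_on (S (Suc n)) (le (Suc n)) F s
                 \<longrightarrow> is_sup_on (S n) (le n) (p n ` F) (p n s)"
      using reg unfolding regular_proj_lim_def by (rule conjunct2)
    show ?thesis using uv psup[OF uv] by (intro r[rule_format] conjI) auto
  qed
  then have "is_sup_on (S n) (le n) {p n u, p n v} (p n (psup (Suc n) u v))" by simp
  from psup_eq[OF p_in[OF uv(1)] p_in[OF uv(2)] this] show ?thesis by simp
qed

abbreviation "X \<equiv> proj_lim S p"

lemma X_mem: "x \<in> X \<Longrightarrow> x k \<in> S k" unfolding proj_lim_def by blast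
lemma X_p: "x \<in> X \<Longrightarrow> x k = p k (x (Suc k))" unfolding proj_lim_def by blast
lemma X_intro: "(\<And>n. z n \<in> S n) \<Longrightarrow> (\<And>n. p n (z (Suc n)) = z n) \<Longrightarrow> z \<in> X"
proof -
  assume h1: "\<And>n. z n \<in> S n" and h2: "\<And>n. p n (z (Suc n)) = z n"
  have "\<forall>n. z n = p n (z (Suc n))" using h2 by (metis)
  then show ?thesis unfolding proj_lim_def mem_Collect_eq using h1 by blast
qed
lemma X_p': "x \<in> X \<Longrightarrow> p k (x (Suc k)) = x k" by (rule sym, rule X_p)
lemma X_add: "x \<in> X \<Longrightarrow> y \<in> X \<Longrightarrow> (\<lambda>k. x k + y k) \<in> X"
  by (rule X_intro) (simp_all add: S_add X_mem p_add X_p')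
lemma X_scale: "x \<in> X \<Longrightarrow> (\<lambda>k. c *\<^sub>R x k) \<in> X"
  by (rule X_intro) (simp_all add: S_scale X_mem p_scale X_p')
lemma X_diff: "x \<in> X \<Longrightarrow> y \<in> X \<Longrightarrow> (\<lambda>k. x k - y k) \<in> X"
  by (rule X_intro) (simp_all add: S_diff X_mem p_diff X_p')
lemma X_0: "(\<lambda>_. 0) \<in> X"
  by (rule X_intro) (simp_all add: S_0 p_0)
lemma X_pos: "x \<in> X \<Longrightarrow> (\<lambda>k. psup k (x k) 0) \<in> X"
  by (rule X_intro) (simp_all add: psup_in S_0 X_mem p_psup p_0 X_p')

lemma X_zero_aux: "x \<in> X \<Longrightarrow> x (k + d) = 0 \<Longrightarrow> x k = 0"
proof (induction d arbitrary: k)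
  case 0 then show ?case by simp
next
  case (Suc d)
  have "x (Suc k + d) = 0" using Suc.prems(2) by simp
  then have "x (Suc k) = 0" by (rule Suc.IH[OF Suc.prems(1)])
  then show ?case using X_p[OF Suc.prems(1), of k] p_0[of k] by simp
qed

lemma X_zero_below: "x \<in> X \<Longrightarrow> x m = 0 \<Longrightarrow> k \<le> m \<Longrightarrow> x k = 0"
proof -
  assume a: "x \<in> X" "x m = 0" "k \<le> m"
  have "x (k + (m - k)) = 0" using a by simp
  then show ?thesis by (rule X_zero_aux[OF a(1)])
qed

context
  fixes a :: "(nat \<Rightarrow> 'a) \<Rightarrow> real"
  assumes ap: "add_pos_on X (lim_le le) (\<lambda>_. 0) a"
begin

lemma a_add: "x \<in> X \<Longrightarrow> y \<in> X \<Longrightarrow> a (\<lambda>k. x k + y k) = a x + a y"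
  using ap unfolding add_pos_on_def additive_on_def plus_fun_def by blast

lemma a_pos: "x \<in> X \<Longrightarrow> (\<And>k. le k 0 (x k)) \<Longrightarrow> 0 \<le> a x"
  using ap unfolding add_pos_on_def positive_fun_on_def lim_le_def by blast

lemma a_diff: "x \<in> X \<Longrightarrow> y \<in> X \<Longrightarrow> a (\<lambda>k. x k - y k) = a x - a y"
  using a_add[OF X_diff[of x y], of y] by simp

lemma a_mono: "x \<in> X \<Longrightarrow> y \<in> X \<Longrightarrow> (\<And>k. le k (x k) (y k)) \<Longrightarrow> a x \<le> a y"
proof -
  assume xy: "x \<in> X" "y \<in> X" and l: "\<And>k. le k (x k) (y k)"
  have "\<And>k. le k 0 (y k - x k)" using le_diff0[OF X_mem[OF xy(1)] X_mem[OF xy(2)] l] .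
  then have "0 \<le> a (\<lambda>k. y k - x k)" using a_pos[OF X_diff[OF xy(2) xy(1)]] by blast
  then show ?thesis using a_diff[OF xy(2) xy(1)] by simp
qed

lemma a_nat_scale: "x \<in> X \<Longrightarrow> a (\<lambda>k. real m *\<^sub>R x k) = real m * a x"
proof (induction m)
  case 0
  have "a (\<lambda>k. 0) = a (\<lambda>k. 0 + 0)" by simp
  also have "\<dots> = a (\<lambda>k. 0) + a (\<lambda>k. 0)" using a_add[OF X_0 X_0] by simp
  finally show ?case by simp
next
  case (Suc m)
  have "(\<lambda>k. real (Suc m) *\<^sub>R x k) = (\<lambda>k. real m *\<^sub>R x k + x k)"
    by (rule ext) (simp add: algebra_simps)
  then have "a (\<lambda>k. real (Suc m) *\<^sub>R x k) = a (\<lambda>k. real m *\<^sub>R x k + x k)" by simp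
  also have "\<dots> = real m * a x + a x" using a_add[OF X_scale Suc.prems] Suc by simp
  finally show ?case by (simp add: algebra_simps)
qed

lemma good_elem:
  assumes x: "x \<in> X" "x n = 0" "a x \<noteq> 0"
  shows "\<exists>y\<in>X. (\<forall>k. le k 0 (y k)) \<and> y n = 0 \<and> 1 \<le> a y"
proof -
  obtain x' where x': "x' \<in> X" "x' n = 0" "0 < a x'"
  proof (cases "a x > 0")
    case True then show ?thesis using x that by blast
  next
    case False
    have "(\<lambda>k. 0 - x k) \<in> X" using X_diff[OF X_0 x(1)] .
    moreover have "a (\<lambda>k. 0 - x k) = - a x"
      using a_diff[OF X_0 x(1)] a_nat_scale[OF X_0, of 0] by simp
    ultimately show ?thesis using that x False by force
  qed
  define q where "q = (\<lambda>k. psup k (x' k) 0)"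
  have q: "q \<in> X" unfolding q_def by (rule X_pos[OF x'(1)])
  have qpos: "\<And>k. le k 0 (q k)" unfolding q_def using psup_ge2[OF X_mem[OF x'(1)] S_0] .
  have qn: "q n = 0" unfolding q_def using x'(2) psup_pos[OF S_0 le_refl[OF S_0]] by simp
  have "a x' \<le> a q" using a_mono[OF x'(1) q] psup_ge1[OF X_mem[OF x'(1)] S_0] unfolding q_def .
  then have aq: "0 < a q" using x' by simp
  obtain m :: nat where m: "1 / a q < real m" using reals_Archimedean2 by blast
  define y where "y = (\<lambda>k. real m *\<^sub>R q k)"
  have "y \<in> X" unfolding y_def by (rule X_scale[OF q])
  moreover have "\<forall>k. le k 0 (y k)"
  proof
    fix k
    have "le k (real m *\<^sub>R 0) (real m *\<^sub>R q k)" by (rule le_scale[OF S_0 X_mem[OF q] qpos]) simp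
    then show "le k 0 (y k)" by (simp add: y_def)
  qed
  moreover have "y n = 0" unfolding y_def using qn by simp
  moreover have "1 \<le> a y" unfolding y_def a_nat_scale[OF q] using m aq
    by (simp add: field_simps)
  ultimately show ?thesis by blast
qed

lemma kernel: "\<exists>n0. \<forall>x\<in>X. x n0 = 0 \<longrightarrow> a x = 0"
proof (rule ccontr)
  assume "\<not> ?thesis"
  then have "\<forall>n. \<exists>y. y \<in> X \<and> (\<forall>k. le k 0 (y k)) \<and> y n = 0 \<and> 1 \<le> a y"
    using good_elem by blast
  then obtain Y where Y: "\<And>n. Y n \<in> X" "\<And>n k. le k 0 (Y n k)" "\<And>n. Y n n = 0" "\<And>n. 1 \<le> a (Y n)"
    by (metis (no_types))
  have Yz: "k \<le> j \<Longrightarrow> Y j k = 0" for j k using X_zero_below[OF Y(1) Y(3)] .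
  have sumM: "k \<le> M \<Longrightarrow> (\<Sum>j<M. Y j k) = (\<Sum>j<k. Y j k)" for k M
  proof (induction M rule: dec_induct)
    case base then show ?case by simp
  next
    case (step M) then show ?case using Yz[of k M] by simp
  qed
  have YS: "Y j k \<in> S k" for j k using X_mem[OF Y(1)] .
  define w where "w N = (\<lambda>k. \<Sum>j<N. Y j k)" for N
  have wX: "w N \<in> X" for N
  proof (rule X_intro)
    fix k show "w N k \<in> S k" unfolding w_def using YS by (intro S_sum) auto
    have "p k (w N (Suc k)) = (\<Sum>j<N. p k (Y j (Suc k)))" unfolding w_def by (rule p_sum) (simp_all add: YS)
    then show "p k (w N (Suc k)) = w N k" unfolding w_def using X_p'[OF Y(1)] by simp
  qed
  have wa: "real N \<le> a (w N)" for N
  proof (induction N)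
    case 0
    have "a (w 0) = a (\<lambda>k. 0)" unfolding w_def by simp
    also have "\<dots> = 0" using a_nat_scale[OF X_0, of 0] by simp
    finally show ?case by simp
  next
    case (Suc N)
    have "w (Suc N) = (\<lambda>k. w N k + Y N k)" unfolding w_def by (simp add: add.commute)
    then have "a (w (Suc N)) = a (w N) + a (Y N)" using a_add[OF wX Y(1)] by simp
    then show ?case using Suc Y(4)[of N] by simp
  qed
  define z where "z = (\<lambda>k. \<Sum>j<k. Y j k)"
  have zX: "z \<in> X"
  proof -
    have "p k (z (Suc k)) = z k" for k
    proof -
      have "p k (z (Suc k)) = (\<Sum>j<Suc k. p k (Y j (Suc k)))" unfolding z_def by (rule p_sum) (simp_all add: YS)
      also have "\<dots> = (\<Sum>j<Suc k. Y j k)" using X_p'[OF Y(1)] by simp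
      also have "\<dots> = z k" unfolding z_def using sumM[of k "Suc k"] by simp
      finally show ?thesis .
    qed
    moreover have "z k \<in> S k" for k unfolding z_def using YS by (intro S_sum) auto
    ultimately show ?thesis by (intro X_intro)
  qed
  have wz: "le k (w N k) (z k)" for N k
  proof -
    define M where "M = max N k"
    have zk: "z k = (\<Sum>j<M. Y j k)" unfolding z_def M_def using sumM[of k "max N k"] by simp
    have "(\<Sum>j<M. Y j k) = (\<Sum>j<N. Y j k) + (\<Sum>j=N..<M. Y j k)"
      unfolding lessThan_atLeast0 by (rule sum.atLeastLessThan_concat[symmetric]) (simp_all add: M_def)
    then have zk2: "z k = w N k + (\<Sum>j=N..<M. Y j k)" using zk unfolding w_def by simp
    have "le k 0 (\<Sum>j=N..<M. Y j k)" using YS Y(2) by (intro sum_pos) auto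
    moreover have s: "(\<Sum>j=N..<M. Y j k) \<in> S k" using YS by (intro S_sum) auto
    ultimately have "le k (0 + w N k) ((\<Sum>j=N..<M. Y j k) + w N k)"
      using le_add[OF S_0 s X_mem[OF wX]] by blast
    then show ?thesis unfolding zk2 by (simp add: add.commute)
  qed
  have "real N \<le> a z" for N using wa[of N] a_mono[OF wX zX wz, of N] by linarith
  moreover obtain N :: nat where "a z < real N" using reals_Archimedean2 by blast
  ultimately show False using not_le by blast
qed


lemma factor: "\<exists>na. \<exists>an :: nat \<Rightarrow> 'a \<Rightarrow> real. \<forall>n\<ge>na.
           add_pos_on (S n) (le n) 0 (an n) \<and> (\<forall>x\<in>X. a x = an n (x n))"
proof -
  obtain n0 where n0: "\<forall>x\<in>X. x n0 = 0 \<longrightarrow> a x = 0" using kernel by blast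
  define an where "an n u = a (SOME x. x \<in> X \<and> x n = u)" for n u
  have an_eq: "an n (x n) = a x" if "n0 \<le> n" "x \<in> X" for n x
  proof -
    have ex: "\<exists>x'. x' \<in> X \<and> x' n = x n" using that by blast
    define x' where "x' = (SOME x'. x' \<in> X \<and> x' n = x n)"
    have x': "x' \<in> X" "x' n = x n" using someI_ex[OF ex] unfolding x'_def by blast+
    have dX: "(\<lambda>k. x' k - x k) \<in> X" by (rule X_diff[OF x'(1) that(2)])
    have "(\<lambda>k. x' k - x k) n = 0" using x'(2) by simp
    then have "(\<lambda>k. x' k - x k) n0 = 0" by (rule X_zero_below[OF dX _ that(1)])
    then have "a (\<lambda>k. x' k - x k) = 0" using bspec[OF n0 dX] by simp
    then have "a x' = a x" using a_diff[OF x'(1) that(2)] by simp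
    then show ?thesis unfolding an_def x'_def[symmetric] by simp
  qed
  have lift: "\<exists>x\<in>X. x n = u" if "u \<in> S n" for n u
  proof -
    have "(\<lambda>x. x n) ` X = S n" using red unfolding reduced_proj_lim_def by blast
    then have "u \<in> (\<lambda>x. x n) ` X" using that by simp
    then show ?thesis by blast
  qed
  have apn: "add_pos_on (S n) (le n) 0 (an n)" if n: "n0 \<le> n" for n
  proof -
    have "additive_on (S n) (an n)" unfolding additive_on_def
    proof (intro ballI)
      fix u v assume u: "u \<in> S n" and v: "v \<in> S n"
      obtain x where x: "x \<in> X" "x n = u" using lift[OF u] by blast
      obtain y where y: "y \<in> X" "y n = v" using lift[OF v] by blast
      have "an n (u + v) = an n ((\<lambda>k. x k + y k) n)" using x y by simp
      also have "\<dots> = a (\<lambda>k. x k + y k)" by (rule an_eq[OF n X_add[OF x(1) y(1)]])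
      also have "\<dots> = a x + a y" by (rule a_add[OF x(1) y(1)])
      also have "\<dots> = an n u + an n v" using an_eq[OF n x(1)] an_eq[OF n y(1)] x y by simp
      finally show "an n (u + v) = an n u + an n v" .
    qed
    moreover have "positive_fun_on (S n) (le n) 0 (an n)" unfolding positive_fun_on_def
    proof (intro ballI impI)
      fix u assume u: "u \<in> S n" and pu: "le n 0 u"
      obtain x where x: "x \<in> X" "x n = u" using lift[OF u] by blast
      define q where "q = (\<lambda>k. psup k (x k) 0)"
      have q: "q \<in> X" unfolding q_def by (rule X_pos[OF x(1)])
      have qn: "q n = u" unfolding q_def using x(2) psup_pos[OF u pu] by simp
      have qp: "le k 0 (q k)" for k unfolding q_def by (rule psup_ge2[OF X_mem[OF x(1)] S_0])
      have "0 \<le> a q" by (rule a_pos[OF q qp])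
      then show "0 \<le> an n u" using an_eq[OF n q] qn by simp
    qed
    ultimately show ?thesis unfolding add_pos_on_def by blast
  qed
  have "\<forall>n\<ge>n0. add_pos_on (S n) (le n) 0 (an n) \<and> (\<forall>x\<in>X. a x = an n (x n))"
  proof (intro allI impI conjI ballI)
    fix n x assume n: "n0 \<le> n" and x: "x \<in> X"
    show "a x = an n (x n)" using an_eq[OF n x] by simp
  next
    fix n assume n: "n0 \<le> n"
    show "add_pos_on (S n) (le n) 0 (an n)" by (rule apn[OF n])
  qed
  then show ?thesis by blast
qed

end
end

lemma conv:
  assumes b: "add_pos_on (S n) (le n) 0 b"
  shows "add_pos_on (proj_lim S p) (lim_le le) (\<lambda>_. 0) (\<lambda>x. b (x n))"
proof -
  have mem: "x n \<in> S n" if "x \<in> proj_lim S p" for x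
    using that unfolding proj_lim_def by blast
  have "additive_on (proj_lim S p) (\<lambda>x. b (x n))" unfolding additive_on_def
  proof (intro ballI)
    fix x y assume x: "x \<in> proj_lim S p" and y: "y \<in> proj_lim S p"
    have "(x + y) n = x n + y n" by (simp add: plus_fun_def)
    then show "b ((x + y) n) = b (x n) + b (y n)"
      using b mem[OF x] mem[OF y] unfolding add_pos_on_def additive_on_def by simp
  qed
  moreover have "positive_fun_on (proj_lim S p) (lim_le le) (\<lambda>_. 0) (\<lambda>x. b (x n))"
    unfolding positive_fun_on_def
  proof (intro ballI impI)
    fix x assume x: "x \<in> proj_lim S p" and l: "lim_le le (\<lambda>_. 0) x"
    have "le n 0 (x n)" using l unfolding lim_le_def by simp
    then show "0 \<le> b (x n)" using b mem[OF x] unfolding add_pos_on_def positive_fun_on_def by simp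
  qed
  ultimately show ?thesis unfolding add_pos_on_def by blast
qed

theorem mainTheorem2:
  fixes S :: "nat \<Rightarrow> 'a::real_vector set"
    and le :: "nat \<Rightarrow> 'a \<Rightarrow> 'a \<Rightarrow> bool"
    and p :: "nat \<Rightarrow> 'a \<Rightarrow> 'a"
  assumes sys: "proj_system S le p"
    and reg: "regular_proj_lim S le p"
    and red: "reduced_proj_lim S p"
  shows
    "(\<forall>a. add_pos_on (proj_lim S p) (lim_le le) (\<lambda>_. 0) a \<longrightarrow>
        (\<exists>na. \<exists>an :: nat \<Rightarrow> 'a \<Rightarrow> real. \<forall>n\<ge>na.
           add_pos_on (S n) (le n) 0 (an n) \<and> (\<forall>x\<in>proj_lim S p. a x = an n (x n))))
   \<and> (\<forall>n b. add_pos_on (S n) (le n) 0 b \<longrightarrow>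
        add_pos_on (proj_lim S p) (lim_le le) (\<lambda>_. 0) (\<lambda>x. b (x n)))
   \<and> (\<forall>a. diff_add_pos_on (proj_lim S p) (lim_le le) (\<lambda>_. 0) a \<longrightarrow>
        (\<exists>na. \<exists>an :: nat \<Rightarrow> 'a \<Rightarrow> real. \<forall>n\<ge>na.
           diff_add_pos_on (S n) (le n) 0 (an n) \<and> (\<forall>x\<in>proj_lim S p. a x = an n (x n))))
   \<and> (\<forall>n b. diff_add_pos_on (S n) (le n) 0 b \<longrightarrow>
        diff_add_pos_on (proj_lim S p) (lim_le le) (\<lambda>_. 0) (\<lambda>x. b (x n)))"
proof -
  interpret P: PL S le p using sys reg red by (rule PL.intro)
  have A: "\<forall>a. add_pos_on (proj_lim S p) (lim_le le) (\<lambda>_. 0) a \<longrightarrow>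
        (\<exists>na. \<exists>an :: nat \<Rightarrow> 'a \<Rightarrow> real. \<forall>n\<ge>na.
           add_pos_on (S n) (le n) 0 (an n) \<and> (\<forall>x\<in>proj_lim S p. a x = an n (x n)))"
    using P.factor by blast
  have B: "\<forall>n b. add_pos_on (S n) (le n) 0 b \<longrightarrow>
        add_pos_on (proj_lim S p) (lim_le le) (\<lambda>_. 0) (\<lambda>x. b (x n))"
    using conv by blast
  have C: "\<exists>na. \<exists>an :: nat \<Rightarrow> 'a \<Rightarrow> real. \<forall>n\<ge>na.
           diff_add_pos_on (S n) (le n) 0 (an n) \<and> (\<forall>x\<in>proj_lim S p. a x = an n (x n))"
    if a: "diff_add_pos_on (proj_lim S p) (lim_le le) (\<lambda>_. 0) a" for a
  proof -
    obtain g h where g: "add_pos_on (proj_lim S p) (lim_le le) (\<lambda>_. 0) g"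
      and h: "add_pos_on (proj_lim S p) (lim_le le) (\<lambda>_. 0) h"
      and gh: "\<forall>x\<in>proj_lim S p. a x = g x - h x"
      using a unfolding diff_add_pos_on_def by blast
    obtain ng gn where G: "\<forall>n\<ge>ng. add_pos_on (S n) (le n) 0 (gn n) \<and> (\<forall>x\<in>proj_lim S p. g x = gn n (x n))"
      using P.factor[OF g] by blast
    obtain nh hn where H: "\<forall>n\<ge>nh. add_pos_on (S n) (le n) 0 (hn n) \<and> (\<forall>x\<in>proj_lim S p. h x = hn n (x n))"
      using P.factor[OF h] by blast
    have "\<forall>n\<ge>max ng nh. diff_add_pos_on (S n) (le n) 0 (\<lambda>u. gn n u - hn n u)
            \<and> (\<forall>x\<in>proj_lim S p. a x = gn n (x n) - hn n (x n))" (is ?ST)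
    proof (intro allI impI conjI ballI)
      fix n assume n: "max ng nh \<le> n"
      then have "ng \<le> n" "nh \<le> n" by auto
      then have "add_pos_on (S n) (le n) 0 (gn n)" "add_pos_on (S n) (le n) 0 (hn n)" using G H by blast+
      then show "diff_add_pos_on (S n) (le n) 0 (\<lambda>u. gn n u - hn n u)"
        unfolding diff_add_pos_on_def by blast
    next
      fix n x assume n: "max ng nh \<le> n" and x: "x \<in> proj_lim S p"
      then have "ng \<le> n" "nh \<le> n" by auto
      then have "g x = gn n (x n)" "h x = hn n (x n)" using G H x by blast+
      then show "a x = gn n (x n) - hn n (x n)" using gh x by simp
    qed
    then have **: "\<forall>n\<ge>max ng nh. diff_add_pos_on (S n) (le n) 0 ((\<lambda>n u. gn n u - hn n u) n)
            \<and> (\<forall>x\<in>proj_lim S p. a x = (\<lambda>n u. gn n u - hn n u) n (x n))" by simp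
    show ?thesis by (rule exI, rule exI, rule **)
  qed
  have D: "diff_add_pos_on (proj_lim S p) (lim_le le) (\<lambda>_. 0) (\<lambda>x. b (x n))"
    if b: "diff_add_pos_on (S n) (le n) 0 b" for n b
  proof -
    obtain g h where g: "add_pos_on (S n) (le n) 0 g" and h: "add_pos_on (S n) (le n) 0 h"
      and gh: "\<forall>x\<in>S n. b x = g x - h x"
      using b unfolding diff_add_pos_on_def by blast
    have "\<forall>x\<in>proj_lim S p. b (x n) = g (x n) - h (x n)"
      using gh unfolding proj_lim_def by blast
    then show ?thesis unfolding diff_add_pos_on_def using conv[where S=S and le=le and n=n and p=p, OF g] conv[where S=S and le=le and n=n and p=p, OF h] by blast
  qed
  show ?thesis using A B C D by blast
qed

end
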